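(* Let $N\ge 2$ be an integer and for $n\ge 0$ let $$r_{N-1,N}(n)=\operatorname{CT}_{X_1,\ldots,X_N}\big(\sigma_{N-1}(X_1+X_1^{-1},\ldots,X_N+X_N^{-1})\big)^n .$$ Then for all $n\ge 0$, $$r_{N-1,N}(2n)=\sum_{\substack{k_1,\ldots,k_N\ge 0\\ k_1+\cdots+k_N=n}}\binom{2n}{2k_1,\ldots,2k_N}\binom{2(n-k_1)}{n-k_1}\cdots\binom{2(n-k_N)}{n-k_N}.$$ Moreover, if $N$ is even then $r_{N-1,N}(2n+1)=0$ for all $n\ge0$, and if $N$ is odd then for all $n\ge 0$, $$r_{N-1,N}(2n+1)=\sum_{\substack{k_1,\ldots,k_N\ge 0\\ k_1+\cdots+k_N=n+\frac{1-N}{2}}}\binom{2n+1}{2k_1+1,\ldots,2k_N+1}\binom{2(n-k_1)}{n-k_1}\cdots\binom{2(n-k_N)}{n-k_N}.$$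
   Context: $\sigma_{M}(y_1,\ldots,y_N)=\sum_{1\le j_1<\cdots<j_M\le N} y_{j_1}\cdots y_{j_M}$ is the $M$-th elementary symmetric polynomial. $\operatorname{CT}_{X_1,\ldots,X_N} f$ denotes the constant term (coefficient of $X_1^0\cdots X_N^0$) of a Laurent polynomial $f$. $\binom{m}{a_1,\ldots,a_N}=\frac{m!}{a_1!\cdots a_N!}$ denotes the multinomial coefficient (with $a_1+\cdots+a_N=m$); an empty sum is $0$. *)

theory Defs
  imports Main "HOL-Library.Poly_Mapping"
begin

text \<open>Laurent polynomials with integer coefficients in variables X_0, X_1, ...:
  finitely supported maps from integer exponent vectors (finitely supported
  nat => int) to int coefficients.\<close>
type_synonym laurent = "(nat \<Rightarrow>\<^sub>0 int) \<Rightarrow>\<^sub>0 int"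

definition LX :: "nat \<Rightarrow> laurent" where
  "LX i = Poly_Mapping.single (Poly_Mapping.single i 1) 1"

definition LXinv :: "nat \<Rightarrow> laurent" where
  "LXinv i = Poly_Mapping.single (Poly_Mapping.single i (-1)) 1"

definition CT :: "laurent \<Rightarrow> int" where
  "CT f = Poly_Mapping.lookup f 0"

definition esym :: "nat \<Rightarrow> nat \<Rightarrow> (nat \<Rightarrow> 'a::comm_ring_1) \<Rightarrow> 'a" where
  "esym M N y = (\<Sum>S\<in>{S. S \<subseteq> {..<N} \<and> card S = M}. \<Prod>j\<in>S. y j)"

definition r :: "nat \<Rightarrow> nat \<Rightarrow> nat \<Rightarrow> int" where
  "r M N n = CT ((esym M N (\<lambda>i. LX i + LXinv i)) ^ n)"

definition multinomial :: "nat \<Rightarrow> nat \<Rightarrow> (nat \<Rightarrow> nat) \<Rightarrow> nat" where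
  "multinomial m N a = fact m div (\<Prod>i<N. fact (a i))"

definition comps :: "nat \<Rightarrow> nat \<Rightarrow> (nat \<Rightarrow> nat) set" where
  "comps N s = {k. (\<forall>i\<ge>N. k i = 0) \<and> (\<Sum>i<N. k i) = s}"

end

theory Submission imports Defs "HOL-Library.FuncSet" begin


lemma comps_finite: "finite (comps N s)"
proof -
  have "comps N s \<subseteq> {f. \<forall>x. (x \<in> {..<N} \<longrightarrow> f x \<in> {..s}) \<and> (x \<notin> {..<N} \<longrightarrow> f x = 0)}"
  proof
    fix k assume k: "k \<in> comps N s"
    hence "k x \<le> s" if "x < N" for x
      using that member_le_sum[of x "{..<N}" k] by (auto simp: comps_def)
    with k show "k \<in> {f. \<forall>x. (x \<in> {..<N} \<longrightarrow> f x \<in> {..s}) \<and> (x \<notin> {..<N} \<longrightarrow> f x = 0)}"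
      by (auto simp: comps_def)
  qed
  thus ?thesis by (rule finite_subset) (rule finite_set_of_finite_funs, auto)
qed

lemma prod_fact_dvd: fixes N :: nat shows "(\<Prod>i<N. fact (a i) :: nat) dvd fact (\<Sum>i<N. a i)"
proof (induction N)
  case 0 then show ?case by simp
next
  case (Suc N)
  have "(\<Prod>i<Suc N. fact (a i) :: nat) = (\<Prod>i<N. fact (a i)) * fact (a N)" by simp
  also have "\<dots> dvd fact (\<Sum>i<N. a i) * fact (a N)" using Suc by (simp add: mult_dvd_mono)
  also have "\<dots> dvd fact ((\<Sum>i<N. a i) + a N)" by (rule fact_fact_dvd_fact)
  finally show ?case by simp
qed

lemma multinomial_split:
  fixes N :: nat
  assumes "(\<Sum>i<N. m i) = k" "k \<le> n"
  shows "multinomial n (Suc N) (m(N := n - k)) = (n choose k) * multinomial k N m"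
proof -
  define P where "P = (\<Prod>i<N. fact (m i) :: nat)"
  obtain Q where Q: "fact k = P * Q" using prod_fact_dvd[where N=N and a=m] assms unfolding P_def by (auto elim: dvdE)
  have P0: "P > 0" unfolding P_def by (simp add: prod_pos)
  have pr: "(\<Prod>i<Suc N. fact ((m(N := n - k)) i) :: nat) = P * fact (n - k)"
    unfolding P_def by (simp add: lessThan_Suc)
  have fn: "fact n = (n choose k) * (P * Q) * fact (n - k)"
    using binomial_fact_lemma[OF assms(2)] Q by (simp add: algebra_simps)
  have mk: "multinomial k N m = Q" unfolding multinomial_def P_def[symmetric] Q using P0 by simp
  show ?thesis unfolding mk unfolding multinomial_def pr fn using P0
    by (simp add: algebra_simps)
qed

lemma multinomial_thm:
  fixes t :: "nat \<Rightarrow> 'a::comm_semiring_1"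
  shows "(\<Sum>j<N. t j) ^ n = (\<Sum>m\<in>comps N n. of_nat (multinomial n N m) * (\<Prod>j<N. t j ^ m j))"
proof (induction N arbitrary: n)
  case 0
  have "comps 0 n = (if n = 0 then {\<lambda>_. 0} else {})" by (auto simp: comps_def)
  then show ?case by (simp add: multinomial_def power_0_left)
next
  case (Suc N)
  have "(\<Sum>j<Suc N. t j) ^ n = ((\<Sum>j<N. t j) + t N) ^ n" by simp
  also have "\<dots> = (\<Sum>k\<le>n. of_nat (n choose k) * (\<Sum>j<N. t j) ^ k * t N ^ (n - k))"
    by (rule binomial_ring)
  also have "\<dots> = (\<Sum>k\<le>n. \<Sum>m\<in>comps N k. of_nat (n choose k) * of_nat (multinomial k N m) * (\<Prod>j<N. t j ^ m j) * t N ^ (n - k))"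
    by (simp add: Suc sum_distrib_left sum_distrib_right mult.assoc)
  also have "\<dots> = (\<Sum>(k,m)\<in>Sigma {..n} (\<lambda>k. comps N k). of_nat (n choose k) * of_nat (multinomial k N m) * (\<Prod>j<N. t j ^ m j) * t N ^ (n - k))"
    by (rule sum.Sigma) (auto simp: comps_finite)
  also have "\<dots> = (\<Sum>m\<in>comps (Suc N) n. of_nat (multinomial n (Suc N) m) * (\<Prod>j<Suc N. t j ^ m j))"
  proof (rule sum.reindex_bij_witness[where i = "\<lambda>m. (n - m N, m(N := 0))" and j = "\<lambda>(k, m). m(N := n - k)"])
    fix a assume a: "a \<in> Sigma {..n} (comps N)"
    then obtain k m where am: "a = (k, m)" "k \<le> n" "m \<in> comps N k" by auto
    then have m0: "\<forall>i\<ge>N. m i = 0" and ms: "(\<Sum>i<N. m i) = k" by (auto simp: comps_def)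
    have sN: "(\<Sum>i<N. (m(N := n - k)) i) = k" using ms by simp
    show "(case a of (k, m) \<Rightarrow> m(N := n - k)) \<in> comps (Suc N) n"
      using am m0 ms sN by (auto simp: comps_def)
    show "(n - (case a of (k, m) \<Rightarrow> m(N := n - k)) N, (case a of (k, m) \<Rightarrow> m(N := n - k))(N := 0)) = a"
      using am m0 by (auto simp: fun_eq_iff)
    have pr: "(\<Prod>j<N. t j ^ (m(N := n - k)) j) = (\<Prod>j<N. t j ^ m j)" by (rule prod.cong) auto
    show "of_nat (multinomial n (Suc N) (case a of (k, m) \<Rightarrow> m(N := n - k))) *
          (\<Prod>j<Suc N. t j ^ (case a of (k, m) \<Rightarrow> m(N := n - k)) j) =
          (case a of (k, m) \<Rightarrow> of_nat (n choose k) * of_nat (multinomial k N m) * (\<Prod>j<N. t j ^ m j) * t N ^ (n - k))"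
      using am multinomial_split[OF ms am(2)] pr by (simp add: mult_ac)
  next
    fix m assume m: "m \<in> comps (Suc N) n"
    then have m0: "\<forall>i\<ge>Suc N. m i = 0" and ms: "(\<Sum>i<N. m i) + m N = n" by (auto simp: comps_def)
    have s2: "(\<Sum>i<N. (m(N := 0)) i) = (\<Sum>i<N. m i)" by (rule sum.cong) auto
    show "(n - m N, m(N := 0)) \<in> Sigma {..n} (comps N)"
      using m0 ms s2 by (auto simp: comps_def)
    show "(case (n - m N, m(N := 0)) of (k, m) \<Rightarrow> m(N := n - k)) = m"
      using ms by (auto simp: fun_eq_iff)
  qed
  finally show ?case .
qed



definition lmono :: "(nat \<Rightarrow>\<^sub>0 int) \<Rightarrow> laurent" where
  "lmono v = Poly_Mapping.single v 1"

lemma lmono_mult: "lmono v * lmono w = lmono (v + w)"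
  by (simp add: lmono_def mult_single)

lemma lmono_zero: "lmono 0 = 1"
  by (simp add: lmono_def)

lemma prod_lmono: "finite A \<Longrightarrow> (\<Prod>i\<in>A. lmono (v i)) = lmono (\<Sum>i\<in>A. v i)"
  by (induction A rule: finite_induct) (simp_all add: lmono_zero lmono_mult add.commute)

lemma LX_pow: "LX i ^ k = lmono (Poly_Mapping.single i (int k))"
proof (induction k)
  case 0 then show ?case by (simp add: lmono_zero)
next
  case (Suc k)
  have "LX i ^ Suc k = lmono (Poly_Mapping.single i 1) * lmono (Poly_Mapping.single i (int k))"
    unfolding power_Suc Suc.IH unfolding LX_def lmono_def by (rule refl)
  also have "\<dots> = lmono (Poly_Mapping.single i (int (Suc k)))"
    by (simp add: lmono_mult single_add[symmetric] add.commute)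
  finally show ?case .
qed

lemma LXinv_pow: "LXinv i ^ k = lmono (Poly_Mapping.single i (- int k))"
proof (induction k)
  case 0 then show ?case by (simp add: lmono_zero)
next
  case (Suc k)
  have "LXinv i ^ Suc k = lmono (Poly_Mapping.single i (-1)) * lmono (Poly_Mapping.single i (- int k))"
    unfolding power_Suc Suc.IH unfolding LXinv_def lmono_def by (rule refl)
  also have "\<dots> = lmono (Poly_Mapping.single i (- int (Suc k)))"
    by (simp add: lmono_mult single_add[symmetric] add.commute)
  finally show ?case .
qed

lemma y_pow: "(LX i + LXinv i) ^ e = (\<Sum>a\<le>e. of_nat (e choose a) * lmono (Poly_Mapping.single i (2 * int a - int e)))"
proof -
  have "(LX i + LXinv i) ^ e = (\<Sum>a\<le>e. of_nat (e choose a) * LX i ^ a * LXinv i ^ (e - a))"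
    by (rule binomial_ring)
  also have "\<dots> = (\<Sum>a\<le>e. of_nat (e choose a) * lmono (Poly_Mapping.single i (2 * int a - int e)))"
  proof (rule sum.cong)
    fix a assume "a \<in> {..e}"
    then have "Poly_Mapping.single i (int a) + Poly_Mapping.single i (- int (e - a)) = Poly_Mapping.single i (2 * int a - int e)"
      by (simp add: single_add[symmetric] of_nat_diff)
    then show "of_nat (e choose a) * LX i ^ a * LXinv i ^ (e - a) = of_nat (e choose a) * lmono (Poly_Mapping.single i (2 * int a - int e))"
      by (simp add: LX_pow LXinv_pow mult.assoc lmono_mult)
  qed simp
  finally show ?thesis .
qed

lemma CT_sum: "finite A \<Longrightarrow> CT (\<Sum>x\<in>A. f x) = (\<Sum>x\<in>A. CT (f x))"
  by (simp add: CT_def lookup_sum)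

lemma CT_ofnat_mult: "CT (of_nat c * f) = int c * CT f"
  by (induction c) (simp_all add: CT_def lookup_add distrib_right)

lemma CT_lmono: "CT (lmono v) = (if v = 0 then 1 else 0)"
  by (simp add: CT_def lmono_def lookup_single when_def)

lemma sum_single_zero:
  fixes x :: "nat \<Rightarrow> int"
  shows "(\<Sum>i<N. Poly_Mapping.single i (x i)) = 0 \<longleftrightarrow> (\<forall>i<N. x i = 0)"
proof -
  have l: "Poly_Mapping.lookup (\<Sum>i<N. Poly_Mapping.single i (x i)) j = (if j < N then x j else 0)" for j
    by (simp add: lookup_sum lookup_single when_def)
  show ?thesis
  proof
    assume "(\<Sum>i<N. Poly_Mapping.single i (x i)) = 0"
    then show "\<forall>i<N. x i = 0" using l by (metis lookup_zero)
  next
    assume "\<forall>i<N. x i = 0"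
    then show "(\<Sum>i<N. Poly_Mapping.single i (x i)) = 0" by simp
  qed
qed

definition cc :: "nat \<Rightarrow> nat" where
  "cc e = (if even e then e choose (e div 2) else 0)"

lemma CT_prod:
  fixes N :: nat and e :: "nat \<Rightarrow> nat"
  shows "CT (\<Prod>i<N. (LX i + LXinv i) ^ e i) = int (\<Prod>i<N. cc (e i))"
proof -
  let ?A = "PiE {..<N} (\<lambda>i. {..e i})"
  have "(\<Prod>i<N. (LX i + LXinv i) ^ e i) =
      (\<Prod>i<N. \<Sum>a\<in>{..e i}. of_nat (e i choose a) * lmono (Poly_Mapping.single i (2 * int a - int (e i))))"
    by (simp add: y_pow)
  also have "\<dots> = (\<Sum>g\<in>?A. \<Prod>i<N. of_nat (e i choose g i) * lmono (Poly_Mapping.single i (2 * int (g i) - int (e i))))"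
    by (rule prod_sum_PiE) auto
  also have "\<dots> = (\<Sum>g\<in>?A. of_nat (\<Prod>i<N. e i choose g i) * lmono (\<Sum>i<N. Poly_Mapping.single i (2 * int (g i) - int (e i))))"
    by (simp add: prod.distrib prod_lmono)
  finally have eq: "(\<Prod>i<N. (LX i + LXinv i) ^ e i) = \<dots>" .
  have "CT (\<Prod>i<N. (LX i + LXinv i) ^ e i) =
     (\<Sum>g\<in>?A. int (\<Prod>i<N. e i choose g i) * (if (\<forall>i<N. 2 * int (g i) - int (e i) = 0) then 1 else 0))"
    unfolding eq by (subst CT_sum) (auto simp: finite_PiE simp del: of_nat_prod simp add: CT_ofnat_mult CT_lmono sum_single_zero intro!: sum.cong)
  also have "\<dots> = int (\<Prod>i<N. cc (e i))"
  proof (cases "\<forall>i<N. even (e i)")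
    case True
    define g0 where "g0 = (\<lambda>i. if i < N then e i div 2 else undefined)"
    have g0A: "g0 \<in> ?A" by (auto simp: g0_def PiE_def extensional_def)
    have "(\<Sum>g\<in>?A. int (\<Prod>i<N. e i choose g i) * (if (\<forall>i<N. 2 * int (g i) - int (e i) = 0) then 1 else 0))
       = (\<Sum>g\<in>?A. if g = g0 then int (\<Prod>i<N. e i choose g0 i) else 0)"
    proof (rule sum.cong)
      fix g assume g: "g \<in> ?A"
      have "(\<forall>i<N. 2 * int (g i) - int (e i) = 0) \<longleftrightarrow> g = g0"
      proof
        assume h: "\<forall>i<N. 2 * int (g i) - int (e i) = 0"
        show "g = g0"
        proof
          fix i show "g i = g0 i"
            using g h[rule_format, of i] by (cases "i < N") (auto simp: g0_def PiE_def extensional_def)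
        qed
      next
        assume "g = g0" then show "\<forall>i<N. 2 * int (g i) - int (e i) = 0"
          using True by (auto simp: g0_def simp flip: of_nat_mult elim!: evenE)
      qed
      then show "int (\<Prod>i<N. e i choose g i) * (if (\<forall>i<N. 2 * int (g i) - int (e i) = 0) then 1 else 0)
         = (if g = g0 then int (\<Prod>i<N. e i choose g0 i) else 0)" by auto
    qed simp
    also have "\<dots> = int (\<Prod>i<N. e i choose g0 i)" using g0A by (simp add: sum.delta sum.delta' finite_PiE del: of_nat_prod)
    also have "\<dots> = int (\<Prod>i<N. cc (e i))"
      using True by (simp add: cc_def g0_def)
    finally show ?thesis .
  next
    case False
    then obtain j where j: "j < N" "odd (e j)" by auto
    have "\<not> (2 * int (g j) - int (e j) = 0)" for g
    proof
      assume "2 * int (g j) - int (e j) = 0"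
      then have "e j = 2 * g j" by linarith
      with j show False by simp
    qed
    then have "(\<forall>i<N. 2 * int (g i) - int (e i) = 0) = False" for g using j by blast
    moreover have "(\<Prod>i<N. cc (e i)) = 0"
      using j by (auto simp: cc_def intro!: prod_zero bexI[of _ j])
    ultimately show ?thesis by (simp only: if_False mult_zero_right sum.neutral_const of_nat_0)
  qed
  finally show ?thesis .
qed



lemma esym_Nm1:
  fixes y :: "nat \<Rightarrow> 'a::comm_ring_1"
  assumes "N \<ge> 1"
  shows "esym (N - 1) N y = (\<Sum>j<N. \<Prod>i\<in>{..<N} - {j}. y i)"
proof -
  have img: "{S. S \<subseteq> {..<N} \<and> card S = N - 1} = (\<lambda>j. {..<N} - {j}) ` {..<N}"
  proof
    show "(\<lambda>j. {..<N} - {j}) ` {..<N} \<subseteq> {S. S \<subseteq> {..<N} \<and> card S = N - 1}" by auto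
  next
    show "{S. S \<subseteq> {..<N} \<and> card S = N - 1} \<subseteq> (\<lambda>j. {..<N} - {j}) ` {..<N}"
    proof
      fix S assume S: "S \<in> {S. S \<subseteq> {..<N} \<and> card S = N - 1}"
      then have fS: "finite S" using finite_subset by blast
      have "card ({..<N} - S) = 1" using S fS assms by (simp add: card_Diff_subset)
      then obtain j where j: "{..<N} - S = {j}" by (auto simp: card_Suc_eq)
      then have "j < N" by auto
      moreover have "S = {..<N} - {j}" using j S by auto
      ultimately show "S \<in> (\<lambda>j. {..<N} - {j}) ` {..<N}" by blast
    qed
  qed
  have inj: "inj_on (\<lambda>j. {..<N} - {j}) {..<N}"
    by (auto simp: inj_on_def)
  show ?thesis unfolding esym_def img by (simp add: sum.reindex[OF inj])
qed

lemma prod_exchange: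
  fixes y :: "nat \<Rightarrow> 'a::comm_ring_1"
  assumes "(\<Sum>j<N. m j) = n"
  shows "(\<Prod>j<N. (\<Prod>i\<in>{..<N} - {j}. y i) ^ m j) = (\<Prod>i<N. y i ^ (n - m i))"
proof -
  have "(\<Prod>j<N. (\<Prod>i\<in>{..<N} - {j}. y i) ^ m j) = (\<Prod>j<N. \<Prod>i<N. y i ^ (if i = j then 0 else m j))"
  proof (rule prod.cong)
    fix j assume j: "j \<in> {..<N}"
    have "(\<Prod>i<N. y i ^ (if i = j then 0 else m j)) = (\<Prod>i\<in>{..<N} - {j}. y i ^ m j)"
      by (rule prod.mono_neutral_cong_right) auto
    then show "(\<Prod>i\<in>{..<N} - {j}. y i) ^ m j = (\<Prod>i<N. y i ^ (if i = j then 0 else m j))"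
      by (simp add: prod_power_distrib)
  qed simp
  also have "\<dots> = (\<Prod>i<N. \<Prod>j<N. y i ^ (if i = j then 0 else m j))" by (rule prod.swap)
  also have "\<dots> = (\<Prod>i<N. y i ^ (n - m i))"
  proof (rule prod.cong)
    fix i assume i: "i \<in> {..<N}"
    have s: "(\<Sum>j<N. (if i = j then 0 else m j)) = n - m i"
    proof -
      have "(\<Sum>j<N. m j) = m i + (\<Sum>j\<in>{..<N} - {i}. m j)" using i by (simp add: sum.remove)
      moreover have "(\<Sum>j<N. (if i = j then 0 else m j)) = (\<Sum>j\<in>{..<N} - {i}. m j)"
        by (rule sum.mono_neutral_cong_right) auto
      ultimately show ?thesis using assms by simp
    qed
    show "(\<Prod>j<N. y i ^ (if i = j then 0 else m j)) = y i ^ (n - m i)"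
      by (simp only: power_sum[symmetric] s)
  qed simp
  finally show ?thesis .
qed

lemma r_formula:
  assumes "N \<ge> 1"
  shows "r (N - 1) N n = (\<Sum>m\<in>comps N n. int (multinomial n N m) * int (\<Prod>i<N. cc (n - m i)))"
proof -
  let ?y = "\<lambda>i. LX i + LXinv i"
  have "esym (N - 1) N ?y ^ n = (\<Sum>m\<in>comps N n. of_nat (multinomial n N m) * (\<Prod>j<N. (\<Prod>i\<in>{..<N} - {j}. ?y i) ^ m j))"
    unfolding esym_Nm1[OF assms] by (rule multinomial_thm)
  also have "\<dots> = (\<Sum>m\<in>comps N n. of_nat (multinomial n N m) * (\<Prod>i<N. ?y i ^ (n - m i)))"
    by (rule sum.cong) (auto simp: comps_def prod_exchange)
  finally have eq: "esym (N - 1) N ?y ^ n = \<dots>" .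
  show ?thesis unfolding r_def eq
    by (simp add: CT_sum comps_finite CT_ofnat_mult CT_prod del: of_nat_prod)
qed



lemma sum_even_parts:
  fixes m :: "nat \<Rightarrow> nat"
  assumes "\<forall>i<N. even (m i)"
  shows "(\<Sum>i<N. m i) = 2 * (\<Sum>i<N. m i div 2)"
proof -
  have "(\<Sum>i<N. m i) = (\<Sum>i<N. 2 * (m i div 2))" using assms by (intro sum.cong) auto
  then show ?thesis by (simp add: sum_distrib_left)
qed

lemma sum_odd_parts:
  fixes m :: "nat \<Rightarrow> nat"
  assumes "\<forall>i<N. odd (m i)"
  shows "(\<Sum>i<N. m i) = 2 * (\<Sum>i<N. m i div 2) + N"
proof -
  have "(\<Sum>i<N. m i) = (\<Sum>i<N. 2 * (m i div 2) + 1)" using assms by (intro sum.cong) auto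
  also have "\<dots> = (\<Sum>i<N. 2 * (m i div 2)) + (\<Sum>i<N. 1)" by (rule sum.distrib)
  finally show ?thesis by (simp add: sum_distrib_left)
qed

lemma cc_even: "cc (2 * a) = (2 * a) choose a"
  by (simp add: cc_def)

lemma comps_le: "m \<in> comps N s \<Longrightarrow> i < N \<Longrightarrow> m i \<le> s"
  unfolding comps_def using member_le_sum[of i "{..<N}" m] by auto

lemma even_part:
  assumes "N \<ge> 1"
  shows "r (N - 1) N (2 * n) =
            int (\<Sum>k\<in>comps N n. multinomial (2 * n) N (\<lambda>i. 2 * k i)
                 * (\<Prod>i<N. (2 * (n - k i)) choose (n - k i)))"
proof -
  have "r (N - 1) N (2 * n) = (\<Sum>m\<in>comps N (2 * n). int (multinomial (2 * n) N m) * int (\<Prod>i<N. cc (2 * n - m i)))"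
    by (rule r_formula[OF assms])
  also have "\<dots> = (\<Sum>k\<in>comps N n. int (multinomial (2 * n) N (\<lambda>i. 2 * k i)
                 * (\<Prod>i<N. (2 * (n - k i)) choose (n - k i))))"
  proof (rule sym, rule sum.reindex_bij_witness_not_neutral[where S' = "{}" and T' = "{m \<in> comps N (2 * n). \<not> (\<forall>i<N. even (m i))}"
        and i = "\<lambda>m i. m i div 2" and j = "\<lambda>k i. 2 * k i"])
    show "finite {}" by simp
    show "finite {m \<in> comps N (2 * n). \<not> (\<forall>i<N. even (m i))}" using comps_finite by simp
  next
    fix k assume k: "k \<in> comps N n - {}"
    show "(\<lambda>i. (2 * k i) div 2) = k" by simp
    have "(\<Sum>i<N. 2 * k i) = 2 * n" using k by (simp add: comps_def sum_distrib_left[symmetric])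
    then show "(\<lambda>i. 2 * k i) \<in> comps N (2 * n) - {m \<in> comps N (2 * n). \<not> (\<forall>i<N. even (m i))}"
      using k by (auto simp: comps_def)
  next
    fix m assume m: "m \<in> comps N (2 * n) - {m \<in> comps N (2 * n). \<not> (\<forall>i<N. even (m i))}"
    then have ev: "\<forall>i<N. even (m i)" and mc: "m \<in> comps N (2 * n)" by auto
    show "(\<lambda>i. 2 * (m i div 2)) = m"
    proof
      fix i show "2 * (m i div 2) = m i" using ev mc by (cases "i < N") (auto simp: comps_def)
    qed
    have "(\<Sum>i<N. m i div 2) = n" using sum_even_parts[OF ev] mc by (simp add: comps_def)
    then show "(\<lambda>i. m i div 2) \<in> comps N n - {}" using mc by (auto simp: comps_def)
  next
    fix m assume m: "m \<in> {m \<in> comps N (2 * n). \<not> (\<forall>i<N. even (m i))}"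
    then obtain j where j: "j < N" "odd (m j)" and mc: "m \<in> comps N (2 * n)" by auto
    have "m j \<le> 2 * n" using comps_le[OF mc j(1)] .
    then have "odd (2 * n - m j)" using j by simp
    then have "cc (2 * n - m j) = 0" by (simp add: cc_def)
    then have "(\<Prod>i<N. cc (2 * n - m i)) = 0" using j by (intro prod_zero) auto
    then show "int (multinomial (2 * n) N m) * int (\<Prod>i<N. cc (2 * n - m i)) = 0" by simp
  next
    fix k assume k: "k \<in> comps N n"
    have "(\<Prod>i<N. cc (2 * n - 2 * k i)) = (\<Prod>i<N. (2 * (n - k i)) choose (n - k i))"
    proof (rule prod.cong)
      fix i assume "i \<in> {..<N}"
      have "2 * n - 2 * k i = 2 * (n - k i)" by simp
      then show "cc (2 * n - 2 * k i) = (2 * (n - k i)) choose (n - k i)" by (simp only: cc_even)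
    qed simp
    then show "int (multinomial (2 * n) N (\<lambda>i. 2 * k i)) * int (\<Prod>i<N. cc (2 * n - 2 * k i)) =
      int (multinomial (2 * n) N (\<lambda>i. 2 * k i) * (\<Prod>i<N. (2 * (n - k i)) choose (n - k i)))"
      by simp
  qed simp
  finally show ?thesis by simp
qed

lemma odd_part_evenN:
  assumes "N \<ge> 1" "even N"
  shows "r (N - 1) N (2 * n + 1) = 0"
proof -
  have "r (N - 1) N (2 * n + 1) = (\<Sum>m\<in>comps N (2 * n + 1). int (multinomial (2 * n + 1) N m) * int (\<Prod>i<N. cc (2 * n + 1 - m i)))"
    by (rule r_formula[OF assms(1)])
  also have "\<dots> = 0"
  proof (rule sum.neutral, rule ballI)
    fix m assume mc: "m \<in> comps N (2 * n + 1)"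
    have "\<exists>j<N. even (m j)"
    proof (rule ccontr)
      assume "\<not> (\<exists>j<N. even (m j))"
      then have "\<forall>i<N. odd (m i)" by auto
      from sum_odd_parts[OF this] mc have "2 * n + 1 = 2 * (\<Sum>i<N. m i div 2) + N" by (simp add: comps_def)
      with assms(2) show False by presburger
    qed
    then obtain j where j: "j < N" "even (m j)" by auto
    have "m j \<le> 2 * n + 1" using comps_le[OF mc j(1)] .
    then have "odd (2 * n + 1 - m j)" using j by simp
    then have "cc (2 * n + 1 - m j) = 0" by (simp add: cc_def)
    then have "(\<Prod>i<N. cc (2 * n + 1 - m i)) = 0" using j by (intro prod_zero) auto
    then show "int (multinomial (2 * n + 1) N m) * int (\<Prod>i<N. cc (2 * n + 1 - m i)) = 0" by simp
  qed
  finally show ?thesis .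
qed

lemma odd_part_oddN:
  assumes "N \<ge> 1" "odd N"
  shows "r (N - 1) N (2 * n + 1) =
            int (\<Sum>k\<in>{k\<in>comps N (nat (int n + (1 - int N) div 2)).
                           int n + (1 - int N) div 2 \<ge> 0}.
                 multinomial (2 * n + 1) N (\<lambda>i. 2 * k i + 1)
                 * (\<Prod>i<N. (2 * (n - k i)) choose (n - k i)))"
proof -
  obtain c where c: "N = 2 * c + 1" using assms(2) by (auto elim: oddE)
  have cd: "(1 - int N) div 2 = - int c" using c by simp
  define S where "S = {k\<in>comps N (nat (int n + (1 - int N) div 2)). int n + (1 - int N) div 2 \<ge> 0}"
  have S: "S = {k\<in>comps N (n - c). c \<le> n}" unfolding S_def cd by (auto simp: nat_diff_distrib)
  have "r (N - 1) N (2 * n + 1) = (\<Sum>m\<in>comps N (2 * n + 1). int (multinomial (2 * n + 1) N m) * int (\<Prod>i<N. cc (2 * n + 1 - m i)))"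
    by (rule r_formula[OF assms(1)])
  also have "\<dots> = (\<Sum>k\<in>S. int (multinomial (2 * n + 1) N (\<lambda>i. 2 * k i + 1)
                 * (\<Prod>i<N. (2 * (n - k i)) choose (n - k i))))"
  proof (rule sym, rule sum.reindex_bij_witness_not_neutral[where S' = "{}" and T' = "{m \<in> comps N (2 * n + 1). \<not> (\<forall>i<N. odd (m i))}"
        and i = "\<lambda>m i. m i div 2" and j = "\<lambda>k i. if i < N then 2 * k i + 1 else 0"])
    show "finite {}" by simp
    show "finite {m \<in> comps N (2 * n + 1). \<not> (\<forall>i<N. odd (m i))}" using comps_finite by simp
  next
    fix k assume k: "k \<in> S - {}"
    then have kc: "k \<in> comps N (n - c)" and cn: "c \<le> n" unfolding S by auto
    show "(\<lambda>i. (if i < N then 2 * k i + 1 else 0) div 2) = k"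
    proof
      fix i show "(if i < N then 2 * k i + 1 else 0) div 2 = k i" using kc by (auto simp: comps_def)
    qed
    have "(\<Sum>i<N. (if i < N then 2 * k i + 1 else 0)) = (\<Sum>i<N. 2 * k i + 1)" by (rule sum.cong) auto
    also have "\<dots> = (\<Sum>i<N. 2 * k i) + (\<Sum>i<N. 1)" by (rule sum.distrib)
    also have "\<dots> = 2 * (n - c) + N" using kc by (simp add: comps_def sum_distrib_left[symmetric])
    also have "\<dots> = 2 * n + 1" using c cn by simp
    finally show "(\<lambda>i. if i < N then 2 * k i + 1 else 0) \<in> comps N (2 * n + 1) - {m \<in> comps N (2 * n + 1). \<not> (\<forall>i<N. odd (m i))}"
      by (auto simp: comps_def)
  next
    fix m assume m: "m \<in> comps N (2 * n + 1) - {m \<in> comps N (2 * n + 1). \<not> (\<forall>i<N. odd (m i))}"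
    then have od: "\<forall>i<N. odd (m i)" and mc: "m \<in> comps N (2 * n + 1)" by auto
    show "(\<lambda>i. if i < N then 2 * (m i div 2) + 1 else 0) = m"
    proof
      fix i show "(if i < N then 2 * (m i div 2) + 1 else 0) = m i" using od mc by (cases "i < N") (auto simp: comps_def)
    qed
    have "2 * n + 1 = 2 * (\<Sum>i<N. m i div 2) + N" using sum_odd_parts[OF od] mc by (simp add: comps_def)
    then have "(\<Sum>i<N. m i div 2) = n - c" "c \<le> n" using c by auto
    then show "(\<lambda>i. m i div 2) \<in> S - {}" using mc unfolding S by (auto simp: comps_def)
  next
    fix m assume m: "m \<in> {m \<in> comps N (2 * n + 1). \<not> (\<forall>i<N. odd (m i))}"
    then obtain j where j: "j < N" "even (m j)" and mc: "m \<in> comps N (2 * n + 1)" by auto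
    have "m j \<le> 2 * n + 1" using comps_le[OF mc j(1)] .
    then have "odd (2 * n + 1 - m j)" using j by simp
    then have "cc (2 * n + 1 - m j) = 0" by (simp add: cc_def)
    then have "(\<Prod>i<N. cc (2 * n + 1 - m i)) = 0" using j by (intro prod_zero) auto
    then show "int (multinomial (2 * n + 1) N m) * int (\<Prod>i<N. cc (2 * n + 1 - m i)) = 0" by simp
  next
    fix k assume k: "k \<in> S"
    then have kc: "k \<in> comps N (n - c)" unfolding S by auto
    have kle: "k i \<le> n" if "i < N" for i using comps_le[OF kc that] by simp
    have "(\<Prod>i<N. cc (2 * n + 1 - (if i < N then 2 * k i + 1 else 0))) = (\<Prod>i<N. (2 * (n - k i)) choose (n - k i))"
    proof (rule prod.cong)
      fix i assume i: "i \<in> {..<N}"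
      have "2 * n + 1 - (if i < N then 2 * k i + 1 else 0) = 2 * (n - k i)" using i kle[of i] by simp
      then show "cc (2 * n + 1 - (if i < N then 2 * k i + 1 else 0)) = (2 * (n - k i)) choose (n - k i)" by (simp only: cc_even)
    qed simp
    moreover have "multinomial (2 * n + 1) N (\<lambda>i. if i < N then 2 * k i + 1 else 0) = multinomial (2 * n + 1) N (\<lambda>i. 2 * k i + 1)"
    proof -
      have "(\<Prod>i<N. fact (if i < N then 2 * k i + 1 else 0) :: nat) = (\<Prod>i<N. fact (2 * k i + 1))"
        by (rule prod.cong) auto
      then show ?thesis unfolding multinomial_def by simp
    qed
    ultimately show "int (multinomial (2 * n + 1) N (\<lambda>i. if i < N then 2 * k i + 1 else 0)) * int (\<Prod>i<N. cc (2 * n + 1 - (if i < N then 2 * k i + 1 else 0))) =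
      int (multinomial (2 * n + 1) N (\<lambda>i. 2 * k i + 1) * (\<Prod>i<N. (2 * (n - k i)) choose (n - k i)))"
      by simp
  qed simp
  finally show ?thesis unfolding S_def by simp
qed

theorem theorem1:
  fixes N :: nat
  assumes "N \<ge> 2"
  shows "(\<forall>n. r (N - 1) N (2 * n) =
            int (\<Sum>k\<in>comps N n. multinomial (2 * n) N (\<lambda>i. 2 * k i)
                 * (\<Prod>i<N. (2 * (n - k i)) choose (n - k i))))
       \<and> (even N \<longrightarrow> (\<forall>n. r (N - 1) N (2 * n + 1) = 0))
       \<and> (odd N \<longrightarrow> (\<forall>n. r (N - 1) N (2 * n + 1) =
            int (\<Sum>k\<in>{k\<in>comps N (nat (int n + (1 - int N) div 2)).
                           int n + (1 - int N) div 2 \<ge> 0}.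
                 multinomial (2 * n + 1) N (\<lambda>i. 2 * k i + 1)
                 * (\<Prod>i<N. (2 * (n - k i)) choose (n - k i)))))"
proof -
  have N1: "N \<ge> 1" using assms by simp
  show ?thesis using even_part[OF N1] odd_part_evenN[OF N1] odd_part_oddN[OF N1] by blast
qed

end
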